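(* Let $\Sigma$ be a finite group, $A$ a pseudofield, $\mathfrak m$ a maximal ideal of $A$, $K=A/\mathfrak m$, $L$ an algebraic closure of $K$, $\overline A=\operatorname{Fun}L$, and let $\Phi\colon A\to\overline A$ be the Taylor homomorphism at the identity associated to the composite $A\to K\to L$ (so $A$ is identified with the difference subring $\Phi(A)$ of $\overline A$). If $D$ is a difference closed pseudofield that is a difference subring of $\overline A$ with $\Phi(A)\subseteq D\subseteq\overline A$, then $D=\overline A$.
   Context: A difference ring is a commutative ring with identity with an action of the group $\Sigma$ by ring automorphisms. A pseudofield is an absolutely flat difference ring with no $\Sigma$-stable ideals other than $0$ and itself. $\operatorname{Fun}L$ is the ring of functions $\Sigma\to L$ with pointwise operations and $(\sigma f)(\tau)=f(\sigma^{-1}\tau)$. For a ring homomorphism $\varphi\colon A\to L$, the Taylor homomorphism at the identity $e$ is the unique difference homomorphism $\Phi\colon A\to\operatorname{Fun}L$ with $\Phi(a)(e)=\varphi(a)$, namely $\Phi(a)(\tau)=\varphi(\tau^{-1}a)$. A pseudofield $A$ is difference closed if for every $n$ and every $\Sigma$-stable ideal $\mathfrak a$ of the difference polynomial ring $A\{y_1,\dots,y_n\}$ (polynomial ring in the indeterminates $\sigma y_i$, with $\tau(\sigma y_i)=(\tau\sigma)y_i$) the radical of $\mathfrak a$ equals the set of difference polynomials vanishing at every common zero of $\mathfrak a$ in $A^n$ (evaluation via $\sigma y_i\mapsto\sigma(a_i)$). *)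

theory Defs
  imports "HOL-Library.Poly_Mapping" "HOL-Library.Function_Algebras"
          "HOL-Computational_Algebra.Polynomial"
begin

text \<open>The group Sigma is a type of class group_add (written additively: sigma tau is sigma + tau,
  the identity e is 0, the inverse is uminus). Rings are subsets S of a commutative ring type,
  with operations inherited from the type.\<close>

definition subring_on :: "'r::comm_ring_1 set \<Rightarrow> bool" where
  "subring_on S \<longleftrightarrow> 0 \<in> S \<and> 1 \<in> S \<and> (\<forall>x\<in>S. \<forall>y\<in>S. x + y \<in> S \<and> x - y \<in> S \<and> x * y \<in> S)
     \<and> (\<forall>x\<in>S. - x \<in> S)"

definition diff_ring :: "('g::group_add \<Rightarrow> 'r::comm_ring_1 \<Rightarrow> 'r) \<Rightarrow> 'r set \<Rightarrow> bool" where
  "diff_ring act S \<longleftrightarrow> subring_on S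
     \<and> (\<forall>\<sigma>. \<forall>x\<in>S. act \<sigma> x \<in> S)
     \<and> (\<forall>x\<in>S. act 0 x = x)
     \<and> (\<forall>\<sigma> \<tau>. \<forall>x\<in>S. act (\<sigma> + \<tau>) x = act \<sigma> (act \<tau> x))
     \<and> (\<forall>\<sigma>. act \<sigma> 1 = 1)
     \<and> (\<forall>\<sigma>. \<forall>x\<in>S. \<forall>y\<in>S. act \<sigma> (x + y) = act \<sigma> x + act \<sigma> y \<and> act \<sigma> (x * y) = act \<sigma> x * act \<sigma> y)"

definition ideal_on :: "'r::comm_ring_1 set \<Rightarrow> 'r set \<Rightarrow> bool" where
  "ideal_on S I \<longleftrightarrow> I \<subseteq> S \<and> 0 \<in> I \<and> (\<forall>x\<in>I. \<forall>y\<in>I. x + y \<in> I) \<and> (\<forall>r\<in>S. \<forall>x\<in>I. r * x \<in> I)"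

definition stable :: "('g \<Rightarrow> 'r \<Rightarrow> 'r) \<Rightarrow> 'r set \<Rightarrow> bool" where
  "stable act I \<longleftrightarrow> (\<forall>\<sigma>. \<forall>x\<in>I. act \<sigma> x \<in> I)"

definition maximal_ideal_on :: "'r::comm_ring_1 set \<Rightarrow> 'r set \<Rightarrow> bool" where
  "maximal_ideal_on S m \<longleftrightarrow> ideal_on S m \<and> m \<noteq> S \<and>
     (\<forall>J. ideal_on S J \<and> m \<subseteq> J \<longrightarrow> J = m \<or> J = S)"

text \<open>Absolutely flat (commutative case): von Neumann regular.\<close>
definition absolutely_flat :: "'r::comm_ring_1 set \<Rightarrow> bool" where
  "absolutely_flat S \<longleftrightarrow> (\<forall>a\<in>S. \<exists>x\<in>S. a = a * a * x)"

definition pseudofield :: "('g::group_add \<Rightarrow> 'r::comm_ring_1 \<Rightarrow> 'r) \<Rightarrow> 'r set \<Rightarrow> bool" where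
  "pseudofield act S \<longleftrightarrow> diff_ring act S \<and> absolutely_flat S \<and>
     (\<forall>I. ideal_on S I \<and> stable act I \<longrightarrow> I = {0} \<or> I = S)"

definition fun_act :: "'g::group_add \<Rightarrow> ('g \<Rightarrow> 'l) \<Rightarrow> ('g \<Rightarrow> 'l)" where
  "fun_act \<sigma> f = (\<lambda>\<tau>. f (- \<sigma> + \<tau>))"

definition taylor :: "('g::group_add \<Rightarrow> 'a \<Rightarrow> 'a) \<Rightarrow> ('a \<Rightarrow> 'l) \<Rightarrow> 'a \<Rightarrow> ('g \<Rightarrow> 'l)" where
  "taylor act \<phi> a = (\<lambda>\<tau>. \<phi> (act (- \<tau>) a))"

text \<open>Difference polynomials in y_1..y_n: polynomials in the indeterminates (sigma, i)
  (standing for sigma y_i, i < n), with coefficients in S.\<close>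
type_synonym ('g, 'r) dpoly = "(('g \<times> nat) \<Rightarrow>\<^sub>0 nat) \<Rightarrow>\<^sub>0 'r"

definition dpoly_carrier :: "'r::comm_ring_1 set \<Rightarrow> nat \<Rightarrow> ('g, 'r) dpoly set" where
  "dpoly_carrier S n = {p. (\<forall>M. Poly_Mapping.lookup p M \<in> S) \<and>
      (\<forall>M\<in>Poly_Mapping.keys p. \<forall>v\<in>Poly_Mapping.keys M. snd v < n)}"

definition dpoly_act :: "('g::group_add \<Rightarrow> 'r::comm_ring_1 \<Rightarrow> 'r) \<Rightarrow> 'g \<Rightarrow> ('g, 'r) dpoly \<Rightarrow> ('g, 'r) dpoly" where
  "dpoly_act act \<tau> p = Poly_Mapping.map (act \<tau>)
     (Poly_Mapping.map_key (\<lambda>M. Poly_Mapping.map_key (\<lambda>(\<rho>, j). (\<tau> + \<rho>, j)) M) p)"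

definition mpoly_eval :: "('v \<Rightarrow> 'r::comm_ring_1) \<Rightarrow> (('v \<Rightarrow>\<^sub>0 nat) \<Rightarrow>\<^sub>0 'r) \<Rightarrow> 'r" where
  "mpoly_eval v p = (\<Sum>M\<in>Poly_Mapping.keys p. Poly_Mapping.lookup p M *
       (\<Prod>x\<in>Poly_Mapping.keys M. v x ^ Poly_Mapping.lookup M x))"

definition dpoly_eval :: "('g \<Rightarrow> 'r::comm_ring_1 \<Rightarrow> 'r) \<Rightarrow> (nat \<Rightarrow> 'r) \<Rightarrow> ('g, 'r) dpoly \<Rightarrow> 'r" where
  "dpoly_eval act a p = mpoly_eval (\<lambda>(\<sigma>, i). act \<sigma> (a i)) p"

definition radical_on :: "'r::comm_ring_1 set \<Rightarrow> 'r set \<Rightarrow> 'r set" where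
  "radical_on S I = {x\<in>S. \<exists>k. x ^ k \<in> I}"

definition difference_closed :: "('g::group_add \<Rightarrow> 'r::comm_ring_1 \<Rightarrow> 'r) \<Rightarrow> 'r set \<Rightarrow> bool" where
  "difference_closed act S \<longleftrightarrow> pseudofield act S \<and>
     (\<forall>n. \<forall>\<aa> :: ('g, 'r) dpoly set.
        ideal_on (dpoly_carrier S n) \<aa> \<and> stable (dpoly_act act) \<aa> \<longrightarrow>
        radical_on (dpoly_carrier S n) \<aa> =
          {p \<in> dpoly_carrier S n. \<forall>a. (\<forall>i<n. a i \<in> S) \<longrightarrow>
              (\<forall>q\<in>\<aa>. dpoly_eval act a q = 0) \<longrightarrow> dpoly_eval act a p = 0})"

definition ring_hom_on :: "'a::comm_ring_1 set \<Rightarrow> ('a \<Rightarrow> 'b::comm_ring_1) \<Rightarrow> bool" where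
  "ring_hom_on S f \<longleftrightarrow> f 1 = 1 \<and> (\<forall>x\<in>S. \<forall>y\<in>S. f (x + y) = f x + f y \<and> f (x * y) = f x * f y)"

definition algebraically_closed :: "'l::field itself \<Rightarrow> bool" where
  "algebraically_closed _ \<longleftrightarrow> (\<forall>p :: 'l poly. degree p > 0 \<longrightarrow> (\<exists>x. poly p x = 0))"

definition algebraic_over :: "'l::field set \<Rightarrow> bool" where
  "algebraic_over K \<longleftrightarrow> (\<forall>x::'l. \<exists>p. p \<noteq> 0 \<and> (\<forall>i. coeff p i \<in> K) \<and> poly p x = 0)"

end

theory Submission
  imports Defs
begin


lemma lookup_map_pm: "Poly_Mapping.lookup (Poly_Mapping.map f p) k = (f (Poly_Mapping.lookup p k) when Poly_Mapping.lookup p k \<noteq> 0)"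
  by transfer simp

lemma lookup_map_key_pm:
  assumes "inj f" shows "Poly_Mapping.lookup (Poly_Mapping.map_key f p) k = Poly_Mapping.lookup p (f k)"
proof -
  have [transfer_rule]: "inj f" by fact
  show ?thesis by transfer simp
qed

definition mon :: "('v \<Rightarrow> 'r::comm_ring_1) \<Rightarrow> ('v \<Rightarrow>\<^sub>0 nat) \<Rightarrow> 'r" where
  "mon v M = (\<Prod>x\<in>Poly_Mapping.keys M. v x ^ Poly_Mapping.lookup M x)"

lemma mon_superset: "finite S \<Longrightarrow> Poly_Mapping.keys M \<subseteq> S \<Longrightarrow> mon v M = (\<Prod>x\<in>S. v x ^ Poly_Mapping.lookup M x)"
  unfolding mon_def by (rule prod.mono_neutral_left) (auto simp: in_keys_iff)

lemma mon_add: "mon v (M + N) = mon v M * mon v N"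
proof -
  let ?S = "Poly_Mapping.keys M \<union> Poly_Mapping.keys N"
  have "mon v (M + N) = (\<Prod>x\<in>?S. v x ^ Poly_Mapping.lookup (M+N) x)"
    by (rule mon_superset) (auto dest: keys_add[THEN subsetD])
  also have "\<dots> = (\<Prod>x\<in>?S. v x ^ Poly_Mapping.lookup M x) * (\<Prod>x\<in>?S. v x ^ Poly_Mapping.lookup N x)"
    by (simp add: lookup_add power_add prod.distrib)
  also have "\<dots> = mon v M * mon v N" by (simp add: mon_superset[of ?S M] mon_superset[of ?S N])
  finally show ?thesis .
qed

lemma mon_zero[simp]: "mon v 0 = 1" by (simp add: mon_def)

lemma ev_superset: "finite S \<Longrightarrow> Poly_Mapping.keys p \<subseteq> S \<Longrightarrow>
   mpoly_eval v p = (\<Sum>M\<in>S. Poly_Mapping.lookup p M * mon v M)"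
  unfolding mpoly_eval_def mon_def by (rule sum.mono_neutral_left) (auto simp: in_keys_iff)

lemma ev_add: "mpoly_eval v (p + q) = mpoly_eval v p + mpoly_eval v q"
proof -
  let ?S = "Poly_Mapping.keys p \<union> Poly_Mapping.keys q"
  have "mpoly_eval v (p + q) = (\<Sum>M\<in>?S. Poly_Mapping.lookup (p+q) M * mon v M)"
    by (rule ev_superset) (auto dest: keys_add[THEN subsetD])
  also have "\<dots> = (\<Sum>M\<in>?S. Poly_Mapping.lookup p M * mon v M) + (\<Sum>M\<in>?S. Poly_Mapping.lookup q M * mon v M)"
    by (simp add: lookup_add distrib_right sum.distrib)
  also have "\<dots> = mpoly_eval v p + mpoly_eval v q" by (simp add: ev_superset[of ?S p] ev_superset[of ?S q])
  finally show ?thesis .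
qed

lemma ev_zero[simp]: "mpoly_eval v 0 = 0" by (simp add: mpoly_eval_def)

lemma ev_single: "mpoly_eval v (Poly_Mapping.single M c) = c * mon v M"
  by (simp add: mpoly_eval_def mon_def)

lemma ev_sum: "mpoly_eval v (\<Sum>i\<in>I. f i) = (\<Sum>i\<in>I. mpoly_eval v (f i))"
  by (induction I rule: infinite_finite_induct) (auto simp: ev_add)

lemma ev_uminus: "mpoly_eval v (- p) = - mpoly_eval v p"
  using ev_add[of v "-p" p] by (simp add: eq_neg_iff_add_eq_0)

lemma ev_minus: "mpoly_eval v (p - q) = mpoly_eval v p - mpoly_eval v q"
  using ev_add[of v p "-q"] by (simp add: ev_uminus)

lemma pm_decomp: "p = (\<Sum>M\<in>Poly_Mapping.keys p. Poly_Mapping.single M (Poly_Mapping.lookup p M))"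
proof (rule poly_mapping_eqI)
  fix k
  show "Poly_Mapping.lookup p k = Poly_Mapping.lookup (\<Sum>M\<in>Poly_Mapping.keys p. Poly_Mapping.single M (Poly_Mapping.lookup p M)) k"
    by (simp add: lookup_sum lookup_single when_def in_keys_iff)
qed

lemma pm_mult_decomp: "p * q = (\<Sum>M\<in>Poly_Mapping.keys p. \<Sum>N\<in>Poly_Mapping.keys q.
    Poly_Mapping.single (M + N) (Poly_Mapping.lookup p M * Poly_Mapping.lookup q N))"
proof -
  have "p * q = (\<Sum>M\<in>Poly_Mapping.keys p. Poly_Mapping.single M (Poly_Mapping.lookup p M)) *
     (\<Sum>N\<in>Poly_Mapping.keys q. Poly_Mapping.single N (Poly_Mapping.lookup q N))"
    using pm_decomp[of p] pm_decomp[of q] by simp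
  then show ?thesis by (simp add: sum_product mult_single)
qed

lemma ev_mult: "mpoly_eval v (p * q) = mpoly_eval v p * mpoly_eval v q"
  by (simp add: pm_mult_decomp[of p q] ev_sum ev_single mon_add
      ev_superset[of "Poly_Mapping.keys p" p] ev_superset[of "Poly_Mapping.keys q" q] sum_product mult_ac)

lemma ev_one: "mpoly_eval v 1 = 1"
  by (simp add: mpoly_eval_def lookup_one)

lemma ev_power: "mpoly_eval v (p ^ k) = mpoly_eval v p ^ k"
  by (induction k) (simp_all add: ev_one ev_mult)

lemma sub_sum: "subring_on S \<Longrightarrow> (\<And>i. i \<in> I \<Longrightarrow> f i \<in> S) \<Longrightarrow> (\<Sum>i\<in>I. f i) \<in> S"
  by (induction I rule: infinite_finite_induct) (auto simp: subring_on_def)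

lemma carrier_zero: "subring_on S \<Longrightarrow> 0 \<in> dpoly_carrier S n"
  by (simp add: dpoly_carrier_def subring_on_def)

lemma carrier_add: "subring_on S \<Longrightarrow> p \<in> dpoly_carrier S n \<Longrightarrow> q \<in> dpoly_carrier S n \<Longrightarrow> p + q \<in> dpoly_carrier S n"
  unfolding dpoly_carrier_def
  apply (simp add: lookup_add subring_on_def)
  using keys_add[of p q] by blast

lemma carrier_uminus: "subring_on S \<Longrightarrow> p \<in> dpoly_carrier S n \<Longrightarrow> - p \<in> dpoly_carrier S n"
  unfolding dpoly_carrier_def by (auto simp: subring_on_def)

lemma carrier_minus: "subring_on S \<Longrightarrow> p \<in> dpoly_carrier S n \<Longrightarrow> q \<in> dpoly_carrier S n \<Longrightarrow> p - q \<in> dpoly_carrier S n"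
  using carrier_add[of S p n "-q"] carrier_uminus[of S q n] by simp

lemma carrier_single: "subring_on S \<Longrightarrow> c \<in> S \<Longrightarrow> (\<forall>v\<in>Poly_Mapping.keys M. snd v < n) \<Longrightarrow>
   Poly_Mapping.single M c \<in> dpoly_carrier S n"
  unfolding dpoly_carrier_def by (auto simp: lookup_single when_def subring_on_def)

lemma carrier_sum: "subring_on S \<Longrightarrow> (\<And>i. i \<in> I \<Longrightarrow> f i \<in> dpoly_carrier S n) \<Longrightarrow> (\<Sum>i\<in>I. f i) \<in> dpoly_carrier S n"
  by (induction I rule: infinite_finite_induct) (auto simp: carrier_zero carrier_add)

lemma carrier_mult: assumes S: "subring_on S" and p: "p \<in> dpoly_carrier S n" and q: "q \<in> dpoly_carrier S n"
  shows "p * q \<in> dpoly_carrier S n"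
proof -
  have "(\<Sum>M\<in>Poly_Mapping.keys p. \<Sum>N\<in>Poly_Mapping.keys q.
    Poly_Mapping.single (M + N) (Poly_Mapping.lookup p M * Poly_Mapping.lookup q N)) \<in> dpoly_carrier S n"
  proof (intro carrier_sum[OF S] carrier_single[OF S])
    fix M N assume M: "M \<in> Poly_Mapping.keys p" and N: "N \<in> Poly_Mapping.keys q"
    show "Poly_Mapping.lookup p M * Poly_Mapping.lookup q N \<in> S"
      using p q S by (auto simp: dpoly_carrier_def subring_on_def)
    show "\<forall>v\<in>Poly_Mapping.keys (M + N). snd v < n"
      using p q M N keys_add[of M N] unfolding dpoly_carrier_def by blast
  qed
  then show ?thesis by (simp add: pm_mult_decomp[of p q])
qed

lemma carrier_one: "subring_on S \<Longrightarrow> 1 \<in> dpoly_carrier S n"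
  unfolding dpoly_carrier_def by (auto simp: lookup_one when_def subring_on_def)

lemma carrier_power: "subring_on S \<Longrightarrow> p \<in> dpoly_carrier S n \<Longrightarrow> p ^ k \<in> dpoly_carrier S n"
  by (induction k) (auto simp: carrier_one carrier_mult)

lemma fun_sum_apply: "(\<Sum>i\<in>I. f i) x = (\<Sum>i\<in>I. f i x)"
  by (induction I rule: infinite_finite_induct) auto

lemma fun_prod_apply: "(\<Prod>i\<in>I. f i) x = (\<Prod>i\<in>I. f i x)"
  by (induction I rule: infinite_finite_induct) auto

lemma fun_power_apply: "(f ^ k) x = (f x) ^ k"
  by (induction k) auto

lemma fun_act_add: "fun_act \<tau> (f + g) = fun_act \<tau> f + fun_act \<tau> g"
  by (auto simp: fun_act_def)
lemma fun_act_mult: "fun_act \<tau> (f * g) = fun_act \<tau> f * fun_act \<tau> g"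
  by (auto simp: fun_act_def)
lemma fun_act_zero[simp]: "fun_act \<tau> 0 = 0"
  by (auto simp: fun_act_def)
lemma fun_act_sum: "fun_act \<tau> (\<Sum>i\<in>I. f i) = (\<Sum>i\<in>I. fun_act \<tau> (f i))"
  by (rule ext) (simp add: fun_act_def fun_sum_apply)
lemma fun_act_prod: "fun_act \<tau> (\<Prod>i\<in>I. f i) = (\<Prod>i\<in>I. fun_act \<tau> (f i))"
  by (rule ext) (simp add: fun_act_def fun_prod_apply)
lemma fun_act_power: "fun_act \<tau> (f ^ k) = (fun_act \<tau> f) ^ k"
  by (rule ext) (simp add: fun_act_def fun_power_apply)
lemma fun_act_comp: "fun_act \<tau> (fun_act \<rho> f) = fun_act (\<tau> + \<rho>) f"
  by (rule ext) (simp only: fun_act_def minus_add add.assoc)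

definition sh :: "'g::group_add \<Rightarrow> 'g \<times> nat \<Rightarrow> 'g \<times> nat" where
  "sh \<tau> = (\<lambda>(\<rho>, j). (\<tau> + \<rho>, j))"

lemma inj_sh: "inj (sh \<tau>)"
  by (auto simp: sh_def inj_def)

lemma sh_inv[simp]: "sh (-\<tau>) (sh \<tau> x) = x" "sh \<tau> (sh (-\<tau>) x) = x"
  by (auto simp: sh_def add.assoc[symmetric] split: prod.splits)

definition KK :: "'g::group_add \<Rightarrow> ('g \<times> nat \<Rightarrow>\<^sub>0 nat) \<Rightarrow> ('g \<times> nat \<Rightarrow>\<^sub>0 nat)" where
  "KK \<tau> M = Poly_Mapping.map_key (sh \<tau>) M"

lemma lookup_KK: "Poly_Mapping.lookup (KK \<tau> M) x = Poly_Mapping.lookup M (sh \<tau> x)"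
  by (simp add: KK_def lookup_map_key_pm inj_sh)

lemma KK_inv[simp]: "KK \<tau> (KK (-\<tau>) M) = M" "KK (-\<tau>) (KK \<tau> M) = M"
  by (auto intro!: poly_mapping_eqI simp: lookup_KK)

lemma inj_KK: "inj (KK \<tau>)"
  by (metis KK_inv(2) injI)

lemma keys_KK: "Poly_Mapping.keys (KK \<tau> M) = sh (-\<tau>) ` Poly_Mapping.keys M"
proof -
  have "Poly_Mapping.keys (KK \<tau> M) = sh \<tau> -` Poly_Mapping.keys M"
    by (simp add: KK_def keys_map_key inj_sh)
  also have "\<dots> = sh (-\<tau>) ` Poly_Mapping.keys M"
    by (auto simp: image_iff) (metis sh_inv(1))
  finally show ?thesis .
qed

lemma dpoly_act_alt: "dpoly_act act \<tau> p = Poly_Mapping.map (act \<tau>) (Poly_Mapping.map_key (KK \<tau>) p)"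
  unfolding dpoly_act_def KK_def sh_def by simp

lemma map_add_pm: assumes "\<And>x y. f (x + y) = f x + f y" "f 0 = 0"
  shows "Poly_Mapping.map f (p + q) = Poly_Mapping.map f p + Poly_Mapping.map f q"
proof (rule poly_mapping_eqI)
  fix k
  have *: "f (Poly_Mapping.lookup p k) + f (Poly_Mapping.lookup q k) = f (Poly_Mapping.lookup p k + Poly_Mapping.lookup q k)"
    using assms by simp
  show "Poly_Mapping.lookup (Poly_Mapping.map f (p + q)) k = Poly_Mapping.lookup (Poly_Mapping.map f p + Poly_Mapping.map f q) k"
    by (cases "Poly_Mapping.lookup p k + Poly_Mapping.lookup q k = 0")
       (auto simp: lookup_map_pm lookup_add when_def assms * simp del: assms(1))
qed

lemma map_zero_pm: "Poly_Mapping.map f 0 = 0"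
  by transfer simp

lemma dpoly_act_single: "dpoly_act fun_act \<tau> (Poly_Mapping.single M c) = Poly_Mapping.single (KK (-\<tau>) M) (fun_act \<tau> c)"
proof -
  have "Poly_Mapping.map_key (KK \<tau>) (Poly_Mapping.single M c) = Poly_Mapping.single (KK (-\<tau>) M) c"
    using map_key_single[OF inj_KK, of \<tau> "KK (-\<tau>) M" c] by simp
  then show ?thesis by (simp add: dpoly_act_alt)
qed

lemma dpoly_act_add: "dpoly_act fun_act \<tau> (p + q) = dpoly_act fun_act \<tau> p + dpoly_act fun_act \<tau> q"
  by (simp add: dpoly_act_alt map_key_plus[OF inj_KK] map_add_pm fun_act_add)

lemma dpoly_act_zero: "dpoly_act fun_act \<tau> 0 = 0"
  by (simp add: dpoly_act_alt map_key_zero[OF inj_KK] map_zero_pm)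

lemma dpoly_act_sum: "dpoly_act fun_act \<tau> (\<Sum>i\<in>I. f i) = (\<Sum>i\<in>I. dpoly_act fun_act \<tau> (f i))"
  by (induction I rule: infinite_finite_induct) (auto simp: dpoly_act_zero dpoly_act_add)

lemma mon_KK: "mon (\<lambda>(\<sigma>, i). fun_act \<sigma> (a i)) (KK (-\<tau>) M) = fun_act \<tau> (mon (\<lambda>(\<sigma>, i). fun_act \<sigma> (a i)) M)"
proof -
  let ?v = "\<lambda>(\<sigma>, i). fun_act \<sigma> (a i)"
  have "mon ?v (KK (-\<tau>) M) = (\<Prod>x\<in>sh \<tau> ` Poly_Mapping.keys M. ?v x ^ Poly_Mapping.lookup M (sh (-\<tau>) x))"
    by (simp add: mon_def keys_KK lookup_KK)
  also have "\<dots> = (\<Prod>y\<in>Poly_Mapping.keys M. ?v (sh \<tau> y) ^ Poly_Mapping.lookup M y)"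
    by (subst prod.reindex[OF inj_on_subset[OF inj_sh subset_UNIV]]) auto
  also have "\<dots> = (\<Prod>y\<in>Poly_Mapping.keys M. fun_act \<tau> (?v y ^ Poly_Mapping.lookup M y))"
    by (rule prod.cong) (auto simp: sh_def fun_act_power fun_act_comp)
  also have "\<dots> = fun_act \<tau> (mon ?v M)" by (simp add: mon_def fun_act_prod)
  finally show ?thesis .
qed

lemma eval_act: "dpoly_eval fun_act a (dpoly_act fun_act \<tau> q) = fun_act \<tau> (dpoly_eval fun_act a q)"
proof -
  let ?v = "\<lambda>(\<sigma>, i). fun_act \<sigma> (a i)"
  have "dpoly_act fun_act \<tau> q = (\<Sum>M\<in>Poly_Mapping.keys q. Poly_Mapping.single (KK (-\<tau>) M) (fun_act \<tau> (Poly_Mapping.lookup q M)))"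
    by (subst pm_decomp[of q]) (simp add: dpoly_act_sum dpoly_act_single)
  then have "dpoly_eval fun_act a (dpoly_act fun_act \<tau> q) = (\<Sum>M\<in>Poly_Mapping.keys q. fun_act \<tau> (Poly_Mapping.lookup q M) * fun_act \<tau> (mon ?v M))"
    by (simp add: dpoly_eval_def ev_sum ev_single mon_KK)
  also have "\<dots> = fun_act \<tau> (dpoly_eval fun_act a q)"
    by (simp add: dpoly_eval_def mpoly_eval_def mon_def fun_act_sum fun_act_mult)
  finally show ?thesis .
qed

lemma carrier_act: assumes D: "diff_ring fun_act D" and p: "p \<in> dpoly_carrier D n"
  shows "dpoly_act fun_act \<tau> p \<in> dpoly_carrier D n"
proof -
  have S: "subring_on D" using D by (simp add: diff_ring_def)
  have "dpoly_act fun_act \<tau> p = (\<Sum>M\<in>Poly_Mapping.keys p. Poly_Mapping.single (KK (-\<tau>) M) (fun_act \<tau> (Poly_Mapping.lookup p M)))"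
    by (subst pm_decomp[of p]) (simp add: dpoly_act_sum dpoly_act_single)
  also have "\<dots> \<in> dpoly_carrier D n"
  proof (intro carrier_sum[OF S] carrier_single[OF S])
    fix M assume M: "M \<in> Poly_Mapping.keys p"
    show "fun_act \<tau> (Poly_Mapping.lookup p M) \<in> D" using D p by (auto simp: diff_ring_def dpoly_carrier_def)
    show "\<forall>v\<in>Poly_Mapping.keys (KK (- \<tau>) M). snd v < n"
      using p M unfolding keys_KK dpoly_carrier_def sh_def by fastforce
  qed
  finally show ?thesis .
qed

lemma neg_add_eq0: "(-a + b = (0::'g::group_add)) = (a = b)"
  by (metis add_minus_cancel add.right_neutral add.left_inverse)

lemma fun_act_0[simp]: "fun_act 0 f = f"
  by (simp add: fun_act_def)

lemma KL:
  fixes D :: "('g::group_add \<Rightarrow> 'l::field) set" and a :: "'g \<Rightarrow> 'l"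
  assumes D_sub: "diff_ring fun_act D" and D_dc: "difference_closed fun_act D"
  shows "\<exists>b. b 0 \<in> D \<and> (\<forall>q\<in>dpoly_carrier D 1. dpoly_eval fun_act (\<lambda>_. a) q = 0 \<longrightarrow> dpoly_eval fun_act b q = 0)"
proof (rule ccontr)
  assume nz: "\<not> ?thesis"
  have S: "subring_on D" using D_sub by (simp add: diff_ring_def)
  define I where "I = {q \<in> dpoly_carrier D 1. dpoly_eval fun_act (\<lambda>_. a) q = 0}"
  have ideal: "ideal_on (dpoly_carrier D 1) I"
    unfolding ideal_on_def I_def
    by (auto simp: carrier_zero[OF S] carrier_add[OF S] carrier_mult[OF S] dpoly_eval_def ev_add ev_mult)
  have stab: "stable (dpoly_act fun_act) I"
    unfolding stable_def I_def
    by (auto simp: carrier_act[OF D_sub] eval_act)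
  from D_dc ideal stab have eq: "radical_on (dpoly_carrier D 1) I =
     {p \<in> dpoly_carrier D 1. \<forall>a. (\<forall>i<1. a i \<in> D) \<longrightarrow>
              (\<forall>q\<in>I. dpoly_eval fun_act a q = 0) \<longrightarrow> dpoly_eval fun_act a p = 0}"
    unfolding difference_closed_def by blast
  have "1 \<in> radical_on (dpoly_carrier D 1) I"
    unfolding eq using nz carrier_one[OF S] unfolding I_def by auto
  then obtain k where "(1::('g, 'g \<Rightarrow> 'l) dpoly) ^ k \<in> I" by (auto simp: radical_on_def)
  then have "dpoly_eval fun_act (\<lambda>_. a) (1::('g, 'g \<Rightarrow> 'l) dpoly) = 0" by (simp add: I_def)
  then have "(1::'g \<Rightarrow> 'l) = 0" by (simp add: dpoly_eval_def ev_one)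
  then have "(1::'g \<Rightarrow> 'l) 0 = 0 0" by simp
  then show False by simp
qed

definition Xv :: "'g \<Rightarrow> ('g, 'r::comm_ring_1) dpoly" where
  "Xv \<rho> = Poly_Mapping.single (Poly_Mapping.single (\<rho>, 0) 1) 1"

lemma Xv_carrier: "subring_on S \<Longrightarrow> Xv \<rho> \<in> dpoly_carrier S 1"
  unfolding Xv_def by (rule carrier_single) (auto simp: subring_on_def)

lemma ev_Xv: "dpoly_eval fun_act b (Xv \<rho>) = fun_act \<rho> (b 0)"
  by (simp add: Xv_def dpoly_eval_def ev_single mon_def)

lemma deval_add: "dpoly_eval act b (p + q) = dpoly_eval act b p + dpoly_eval act b q"
  by (simp add: dpoly_eval_def ev_add)
lemma deval_minus: "dpoly_eval act b (p - q) = dpoly_eval act b p - dpoly_eval act b q"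
  by (simp add: dpoly_eval_def ev_minus)
lemma deval_mult: "dpoly_eval act b (p * q) = dpoly_eval act b p * dpoly_eval act b q"
  by (simp add: dpoly_eval_def ev_mult)
lemma deval_power: "dpoly_eval act b (p ^ k) = dpoly_eval act b p ^ k"
  by (simp add: dpoly_eval_def ev_power)
lemma deval_one: "dpoly_eval act b 1 = 1"
  by (simp add: dpoly_eval_def ev_one)
lemma deval_sum: "dpoly_eval act b (\<Sum>i\<in>I. f i) = (\<Sum>i\<in>I. dpoly_eval act b (f i))"
  by (simp add: dpoly_eval_def ev_sum)
lemma deval_const: "dpoly_eval act b (Poly_Mapping.single 0 c) = c"
  by (simp add: dpoly_eval_def ev_single)




lemma E0:
  fixes D :: "('g::{group_add,finite} \<Rightarrow> 'l::field) set"
  assumes D_sub: "diff_ring fun_act D" and D_dc: "difference_closed fun_act D"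
  shows "(\<lambda>x. if x = 0 then 1 else 0) \<in> D"
proof -
  define e0 :: "'g \<Rightarrow> 'l" where "e0 = (\<lambda>x. if x = 0 then 1 else 0)"
  have S: "subring_on D" using D_sub by (simp add: diff_ring_def)
  obtain b where b0: "b 0 \<in> D" and hb: "\<And>q. q \<in> dpoly_carrier D 1 \<Longrightarrow> dpoly_eval fun_act (\<lambda>_. e0) q = 0 \<Longrightarrow> dpoly_eval fun_act b q = 0"
    using KL[OF D_sub D_dc, of e0] by blast
  define c where "c = b 0"
  have X: "\<And>\<rho>. Xv \<rho> \<in> dpoly_carrier D 1" by (rule Xv_carrier[OF S])
  have "dpoly_eval fun_act b (Xv 0 * Xv 0 - Xv 0) = 0"
  proof (rule hb)
    show "Xv 0 * Xv 0 - Xv 0 \<in> dpoly_carrier D 1"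
      by (intro carrier_minus[OF S] carrier_mult[OF S] X)
    show "dpoly_eval fun_act (\<lambda>_. e0) (Xv 0 * Xv 0 - Xv 0) = 0"
      by (simp add: deval_minus deval_mult ev_Xv e0_def fun_eq_iff)
  qed
  then have idem: "c * c - c = 0" by (simp add: deval_minus deval_mult ev_Xv c_def)
  have orth: "c * fun_act \<rho> c = 0" if "\<rho> \<noteq> 0" for \<rho>
  proof -
    have "dpoly_eval fun_act b (Xv 0 * Xv \<rho>) = 0"
    proof (rule hb)
      show "Xv 0 * Xv \<rho> \<in> dpoly_carrier D 1"
        by (intro carrier_mult[OF S] X)
      show "dpoly_eval fun_act (\<lambda>_. e0) (Xv 0 * Xv \<rho>) = 0"
        using that by (auto simp add: deval_mult ev_Xv e0_def fun_eq_iff fun_act_def neg_add_eq0)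
    qed
    then show ?thesis by (simp add: deval_mult ev_Xv c_def)
  qed
  have "dpoly_eval fun_act b ((\<Sum>\<rho>\<in>UNIV. Xv \<rho>) - 1) = 0"
  proof (rule hb)
    show "(\<Sum>\<rho>\<in>UNIV. Xv \<rho>) - 1 \<in> dpoly_carrier D 1"
      by (intro carrier_minus[OF S] carrier_sum[OF S] X carrier_one[OF S])
    show "dpoly_eval fun_act (\<lambda>_. e0) ((\<Sum>\<rho>\<in>UNIV. Xv \<rho>) - 1) = 0"
    proof -
      have "(\<Sum>\<rho>\<in>UNIV. fun_act \<rho> e0) = 1"
      proof
        fix x
        have "(\<Sum>\<rho>\<in>UNIV. fun_act \<rho> e0) x = (\<Sum>\<rho>\<in>UNIV. if \<rho> = x then 1 else 0)"
          by (simp add: fun_sum_apply fun_act_def e0_def neg_add_eq0)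
        also have "\<dots> = 1" by simp
        finally show "(\<Sum>\<rho>\<in>UNIV. fun_act \<rho> e0) x = 1 x" by simp
      qed
      then show ?thesis by (simp add: deval_minus deval_sum deval_one ev_Xv)
    qed
  qed
  then have sum1: "(\<Sum>\<rho>\<in>UNIV. fun_act \<rho> c) = 1"
    by (simp add: deval_minus deval_sum deval_one ev_Xv c_def)
  obtain x0 where cx0: "c x0 \<noteq> 0"
  proof -
    have "(\<Sum>\<rho>\<in>UNIV. fun_act \<rho> c) 0 = 1" using sum1 by simp
    then have "(\<Sum>\<rho>\<in>UNIV. c (-\<rho>)) \<noteq> 0" by (simp add: fun_sum_apply fun_act_def)
    then obtain \<rho> where "c (-\<rho>) \<noteq> 0" by (meson sum.neutral)
    then show ?thesis using that by blast
  qed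
  have c1: "c x0 = 1"
  proof -
    have "c x0 * c x0 - c x0 = 0" using fun_cong[OF idem, of x0] by simp
    then have "c x0 * (c x0 - 1) = 0" by (simp add: algebra_simps)
    then show ?thesis using cx0 by simp
  qed
  have cz: "c z = 0" if "z \<noteq> x0" for z
  proof -
    have ne: "z + - x0 \<noteq> 0" using that by (metis add_minus_cancel add.right_neutral minus_add_cancel)
    have "(c * fun_act (z + - x0) c) z = 0" using orth[OF ne] by simp
    moreover have "- (z + - x0) + z = x0" by (simp add: minus_add add.assoc)
    ultimately show ?thesis using c1 by (simp add: fun_act_def)
  qed
  have "e0 = fun_act (- x0) c"
  proof
    fix y
    show "e0 y = fun_act (- x0) c y"
    proof (cases "y = 0")
      case True then show ?thesis using c1 by (simp add: e0_def fun_act_def)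
    next
      case False
      then have "x0 + y \<noteq> x0" by (metis add_left_cancel add.right_neutral)
      then show ?thesis using False cz[of "x0 + y"] by (simp add: e0_def fun_act_def)
    qed
  qed
  moreover have "fun_act (- x0) c \<in> D" using D_sub b0 by (simp add: diff_ring_def c_def)
  ultimately have "e0 \<in> D" by simp
  then show ?thesis unfolding e0_def .
qed

lemma Froot:
  fixes D :: "('g::{group_add,finite} \<Rightarrow> 'l::field) set" and p :: "'l poly"
  assumes D_sub: "diff_ring fun_act D" and D_dc: "difference_closed fun_act D"
    and L_closed: "algebraically_closed TYPE('l)"
    and deg: "degree p > 0" and co: "\<And>i. coeff p i \<in> (\<lambda>d. d 0) ` D"
  shows "\<exists>r\<in>(\<lambda>d. d 0) ` D. poly p r = 0"
proof -
  define e0 :: "'g \<Rightarrow> 'l" where "e0 = (\<lambda>x. if x = 0 then 1 else 0)"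
  have S: "subring_on D" using D_sub by (simp add: diff_ring_def)
  have e0D: "e0 \<in> D" unfolding e0_def by (rule E0[OF D_sub D_dc])
  obtain r0 where r0: "poly p r0 = 0" using L_closed deg by (auto simp: algebraically_closed_def)
  define dd where "dd i = (SOME d. d \<in> D \<and> d 0 = coeff p i)" for i
  have dd: "dd i \<in> D \<and> dd i 0 = coeff p i" for i
  proof -
    have "\<exists>d. d \<in> D \<and> d 0 = coeff p i" using co[of i] by force
    then show ?thesis unfolding dd_def by (rule someI_ex)
  qed
  define Q :: "('g, 'g \<Rightarrow> 'l) dpoly" where
    "Q = (\<Sum>i\<le>degree p. Poly_Mapping.single 0 (dd i * e0) * Xv 0 ^ i)"
  have Qc: "Q \<in> dpoly_carrier D 1"
    unfolding Q_def
  proof (intro carrier_sum[OF S] carrier_mult[OF S] carrier_power[OF S] Xv_carrier[OF S] carrier_single[OF S])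
    fix i show "dd i * e0 \<in> D" using dd[of i] e0D S by (auto simp: subring_on_def)
  qed simp
  define a0 :: "'g \<Rightarrow> 'l" where "a0 = (\<lambda>x. if x = 0 then r0 else 0)"
  have evQ: "dpoly_eval fun_act b Q = (\<Sum>i\<le>degree p. (dd i * e0) * (b 0) ^ i)" for b
    by (simp add: Q_def deval_sum deval_mult deval_power deval_const ev_Xv)
  have "dpoly_eval fun_act (\<lambda>_. a0) Q = 0"
  proof
    fix x
    show "dpoly_eval fun_act (\<lambda>_. a0) Q x = 0 x"
    proof (cases "x = 0")
      case True
      then have "dpoly_eval fun_act (\<lambda>_. a0) Q x = (\<Sum>i\<le>degree p. coeff p i * r0 ^ i)"
        by (simp add: evQ fun_sum_apply fun_power_apply e0_def a0_def dd)
      also have "\<dots> = 0" using r0 by (simp add: poly_altdef)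
      finally show ?thesis by simp
    next
      case False
      then show ?thesis by (simp add: evQ fun_sum_apply fun_power_apply e0_def)
    qed
  qed
  then obtain b where b0: "b 0 \<in> D" and hb: "dpoly_eval fun_act b Q = 0"
    using KL[OF D_sub D_dc, of a0] Qc by blast
  have "(\<Sum>i\<le>degree p. coeff p i * (b 0 0) ^ i) = dpoly_eval fun_act b Q 0"
    by (simp add: evQ fun_sum_apply fun_power_apply e0_def dd)
  also have "\<dots> = 0" using hb by simp
  finally have "poly p (b 0 0) = 0" by (simp add: poly_altdef)
  then show ?thesis using b0 by blast
qed

lemma F_subring: assumes "subring_on D" shows "subring_on ((\<lambda>d. d 0) ` (D :: ('g::zero \<Rightarrow> 'l::comm_ring_1) set))"
  using assms unfolding subring_on_def
  by (auto simp: image_iff) (metis plus_fun_apply minus_apply times_fun_apply zero_fun_apply one_fun_apply uminus_apply)+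

lemma poly_in_F: assumes S: "subring_on F" and "\<And>i. coeff p i \<in> F" and "c \<in> F"
  shows "poly p c \<in> F"
  using assms(2)
proof (induction p rule: pCons_induct)
  case 0 then show ?case using S by (simp add: subring_on_def)
next
  case (pCons a p)
  have "a \<in> F" using pCons.prems[of 0] by simp
  moreover have "poly p c \<in> F" using pCons.IH pCons.prems[of "Suc _"] by simp
  ultimately show ?case using S \<open>c \<in> F\<close> by (simp add: subring_on_def)
qed

lemma sdiv_in_F: assumes S: "subring_on F" and "\<And>i. coeff p i \<in> F" and c: "c \<in> F"
  shows "coeff (synthetic_div p c) i \<in> F"
  using assms(2)
proof (induction p arbitrary: i rule: pCons_induct)
  case 0 then show ?case using S by (simp add: subring_on_def)
next
  case (pCons a p)
  have cp: "\<And>i. coeff p i \<in> F" using pCons.prems[of "Suc _"] by simp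
  show ?case
  proof (cases i)
    case 0 then show ?thesis using poly_in_F[OF S cp c] by simp
  next
    case (Suc j) then show ?thesis using pCons.IH[OF cp] by simp
  qed
qed

lemma alg_in_F:
  fixes F :: "'l::field set"
  assumes S: "subring_on F"
    and AC: "\<And>p. degree p > 0 \<Longrightarrow> (\<And>i. coeff p i \<in> F) \<Longrightarrow> \<exists>r\<in>F. poly p r = 0"
  shows "p \<noteq> 0 \<Longrightarrow> (\<And>i. coeff p i \<in> F) \<Longrightarrow> poly p l = 0 \<Longrightarrow> l \<in> F"
proof (induction "degree p" arbitrary: p rule: less_induct)
  case less
  show ?case
  proof (cases "degree p = 0")
    case True
    then obtain c where "p = [:c:]" by (metis degree_eq_zeroE)
    then show ?thesis using less.prems by simp
  next
    case False
    then obtain r where r: "r \<in> F" "poly p r = 0" using AC[of p] less.prems by auto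
    define q where "q = synthetic_div p r"
    have pq: "p = [:-r, 1:] * q" using synthetic_div_correct'[of r p] r by (simp add: q_def)
    show ?thesis
    proof (cases "l = r")
      case True then show ?thesis using r by simp
    next
      case False
      have "poly q l = 0" using less.prems(3) False by (simp add: pq)
      moreover have "q \<noteq> 0" using less.prems(1) pq by auto
      moreover have "degree q < degree p" using \<open>degree p \<noteq> 0\<close> by (simp add: q_def degree_synthetic_div)
      moreover have "\<And>i. coeff q i \<in> F" unfolding q_def by (rule sdiv_in_F[OF S less.prems(2) r(1)])
      ultimately show ?thesis using less.hyps by blast
    qed
  qed
qed

theorem proposition4p14:
  fixes act :: "'g::{group_add, finite} \<Rightarrow> 'a::comm_ring_1 \<Rightarrow> 'a"
    and m :: "'a set"
    and \<phi> :: "'a \<Rightarrow> 'l::field"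
    and D :: "('g \<Rightarrow> 'l) set"
  assumes A_pf: "pseudofield act (UNIV :: 'a set)"
    and m_max: "maximal_ideal_on UNIV m"
    and \<phi>_hom: "ring_hom_on UNIV \<phi>"
    and \<phi>_ker: "{a. \<phi> a = 0} = m"
    and L_closed: "algebraically_closed TYPE('l)"
    and L_alg: "algebraic_over (range \<phi>)"
    and D_sub: "diff_ring fun_act D"
    and D_contains: "range (taylor act \<phi>) \<subseteq> D"
    and D_pf: "pseudofield fun_act D"
    and D_dc: "difference_closed fun_act D"
  shows "D = UNIV"
proof -
  define F where "F = (\<lambda>d. d 0) ` D"
  have S: "subring_on D" using D_sub by (simp add: diff_ring_def)
  have SF: "subring_on F" unfolding F_def by (rule F_subring[OF S])
  have act0: "act 0 x = x" for x using A_pf by (simp add: pseudofield_def diff_ring_def)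
  have phiF: "\<phi> c \<in> F" for c
  proof -
    have "taylor act \<phi> c \<in> D" using D_contains by auto
    moreover have "taylor act \<phi> c 0 = \<phi> c" by (simp add: taylor_def act0)
    ultimately show ?thesis unfolding F_def by (metis image_eqI)
  qed
  have allF: "l \<in> F" for l
  proof -
    obtain p where p: "p \<noteq> 0" "\<And>i. coeff p i \<in> range \<phi>" "poly p l = 0"
      using L_alg unfolding algebraic_over_def by blast
    show ?thesis
    proof (rule alg_in_F[OF SF _ p(1) _ p(3)])
      fix q :: "'l poly" assume "degree q > 0" "\<And>i. coeff q i \<in> F"
      then show "\<exists>r\<in>F. poly q r = 0" unfolding F_def by (rule Froot[OF D_sub D_dc L_closed])
    next
      fix i show "coeff p i \<in> F" using p(2)[of i] phiF by auto
    qed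
  qed
  define e0 :: "'g \<Rightarrow> 'l" where "e0 = (\<lambda>x. if x = 0 then 1 else 0)"
  have e0D: "e0 \<in> D" unfolding e0_def by (rule E0[OF D_sub D_dc])
  show ?thesis
  proof (rule set_eqI, rule iffI)
    fix f :: "'g \<Rightarrow> 'l" assume "f \<in> UNIV"
    define dd where "dd t = (SOME d. d \<in> D \<and> d 0 = f t)" for t
    have dd: "dd t \<in> D \<and> dd t 0 = f t" for t
    proof -
      have "\<exists>d. d \<in> D \<and> d 0 = f t" using allF[of "f t"] unfolding F_def by force
      then show ?thesis unfolding dd_def by (rule someI_ex)
    qed
    have "f = (\<Sum>t\<in>UNIV. fun_act t (e0 * dd t))"
    proof
      fix x
      have "(\<Sum>t\<in>UNIV. fun_act t (e0 * dd t)) x = (\<Sum>t\<in>UNIV. if t = x then f t else 0)"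
        unfolding fun_sum_apply by (rule sum.cong) (auto simp: fun_act_def e0_def neg_add_eq0 dd)
      also have "\<dots> = f x" by simp
      finally show "f x = (\<Sum>t\<in>UNIV. fun_act t (e0 * dd t)) x" by (simp add: fun_sum_apply)
    qed
    also have "\<dots> \<in> D"
    proof (rule sub_sum[OF S])
      fix t
      have "e0 * dd t \<in> D" using S e0D dd[of t] by (simp add: subring_on_def)
      then show "fun_act t (e0 * dd t) \<in> D" using D_sub by (simp add: diff_ring_def)
    qed
    finally show "f \<in> D" .
  qed simp
qed

end
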